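(* Let $r>0$, let $k\in\{2,\dots,n\}$, and let $\mathbf{c}=(c_1,\dots,c_{k-1},c_k,0,\dots,0)\in\mathbb{R}^n_{\ge0}$ and $\mathbf{c}'=(c_1,\dots,c_{k-1},0,0,\dots,0)$ (i.e. $\mathbf{c}'$ is obtained from $\mathbf{c}$ by replacing its $k$-th component by $0$). Then $$\mathrm{Vol}\big(C(\mathbf{0},1)\cap C(\mathbf{c},r)\big)\le \mathrm{Vol}\big(C(\mathbf{0},1)\cap C(\mathbf{c}',r)\big).$$
   Context: For $\mathbf{c}\in\mathbb{R}^n$, $r\ge 0$, $C(\mathbf{c},r)=\{\mathbf{x}\in\mathbb{R}^n:\|\mathbf{x}-\mathbf{c}\|_1\le r\}$. *)

theory Defs
  imports "HOL-Analysis.Analysis"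
begin

text \<open>Points of R^n are represented as extensional functions on the index set {1..n};
  Lebesgue measure on R^n is the n-fold product of Lebesgue-Borel measure.\<close>

definition lebesgue_n :: "nat \<Rightarrow> (nat \<Rightarrow> real) measure" where
  "lebesgue_n n = Pi\<^sub>M {1..n} (\<lambda>_. lborel)"

definition l1_ball :: "nat \<Rightarrow> (nat \<Rightarrow> real) \<Rightarrow> real \<Rightarrow> (nat \<Rightarrow> real) set" where
  "l1_ball n c r = {x \<in> PiE {1..n} (\<lambda>_. UNIV). (\<Sum>i\<in>{1..n}. \<bar>x i - c i\<bar>) \<le> r}"

end

theory Submission
  imports Defs
begin

lemma interval_meas:
  fixes a b d :: real
  shows "emeasure lborel {y::real. \<bar>y\<bar> \<le> a \<and> \<bar>y - d\<bar> \<le> b}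
       \<le> emeasure lborel {y::real. \<bar>y\<bar> \<le> a \<and> \<bar>y\<bar> \<le> b}"
proof (cases "a \<ge> 0 \<and> b \<ge> 0")
  case False
  then have "{y::real. \<bar>y\<bar> \<le> a \<and> \<bar>y - d\<bar> \<le> b} = {}" by auto
  then show ?thesis by (simp only: emeasure_empty zero_le)
next
  case True
  have R: "{y::real. \<bar>y\<bar> \<le> a \<and> \<bar>y\<bar> \<le> b} = {- min a b .. min a b}" by auto
  have L1: "{y::real. \<bar>y\<bar> \<le> a \<and> \<bar>y - d\<bar> \<le> b} \<subseteq> {-a..a}" by auto
  have L2: "{y::real. \<bar>y\<bar> \<le> a \<and> \<bar>y - d\<bar> \<le> b} \<subseteq> {d-b..d+b}" by auto
  have m: "{y::real. \<bar>y\<bar> \<le> a \<and> \<bar>y - d\<bar> \<le> b} \<in> sets lborel" by measurable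
  have "emeasure lborel {y::real. \<bar>y\<bar> \<le> a \<and> \<bar>y - d\<bar> \<le> b} \<le> ennreal (2*a)"
    using emeasure_mono[OF L1, of lborel] True by simp
  moreover have "emeasure lborel {y::real. \<bar>y\<bar> \<le> a \<and> \<bar>y - d\<bar> \<le> b} \<le> ennreal (2*b)"
    using emeasure_mono[OF L2, of lborel] True by simp
  ultimately have "emeasure lborel {y::real. \<bar>y\<bar> \<le> a \<and> \<bar>y - d\<bar> \<le> b} \<le> ennreal (2 * min a b)"
    by (cases "a \<le> b") (auto simp: min_def)
  also have "\<dots> = emeasure lborel {y::real. \<bar>y\<bar> \<le> a \<and> \<bar>y\<bar> \<le> b}"
    unfolding R using True by (subst emeasure_lborel_Icc) auto
  finally show ?thesis .
qed

lemma slice: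
  assumes k: "k \<in> {1..n}" and x: "x \<in> PiE ({1..n}-{k}) (\<lambda>_. UNIV)"
  shows "x(k:=y) \<in> l1_ball n c r \<longleftrightarrow> \<bar>y - c k\<bar> \<le> r - (\<Sum>i\<in>{1..n}-{k}. \<bar>x i - c i\<bar>)"
proof -
  have "x(k:=y) \<in> PiE {1..n} (\<lambda>_. UNIV)"
    using x k by (auto simp: PiE_iff extensional_def)
  moreover have "(\<Sum>i\<in>{1..n}. \<bar>(x(k:=y)) i - c i\<bar>) = \<bar>y - c k\<bar> + (\<Sum>i\<in>{1..n}-{k}. \<bar>x i - c i\<bar>)"
    using k by (subst sum.remove[of _ k]) auto
  ultimately show ?thesis unfolding l1_ball_def by auto
qed

lemma l1_ball_sets: "l1_ball n c r \<in> sets (lebesgue_n n)"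
proof -
  have "l1_ball n c r = {x \<in> space (lebesgue_n n). (\<Sum>i\<in>{1..n}. \<bar>x i - c i\<bar>) \<le> r}"
    unfolding l1_ball_def lebesgue_n_def by (simp add: space_PiM)
  also have "\<dots> \<in> sets (lebesgue_n n)" unfolding lebesgue_n_def by measurable
  finally show ?thesis .
qed

theorem mainTheorem8:
  fixes n k :: nat and c :: "nat \<Rightarrow> real" and r :: real
  assumes "r > 0" and "2 \<le> k" and "k \<le> n"
    and "\<forall>i\<in>{1..n}. c i \<ge> 0"
    and "\<forall>i\<in>{k<..n}. c i = 0"
  shows "emeasure (lebesgue_n n) (l1_ball n (\<lambda>_. 0) 1 \<inter> l1_ball n c r)
       \<le> emeasure (lebesgue_n n) (l1_ball n (\<lambda>_. 0) 1 \<inter> l1_ball n (c(k := 0)) r)"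
proof -
  interpret product_sigma_finite "\<lambda>_. lborel" by standard
  define I where "I = {1..n} - {k}"
  have k: "k \<in> {1..n}" using assms by auto
  have ins: "{1..n} = insert k I" using k unfolding I_def by auto
  have fin: "finite I" "k \<notin> I" unfolding I_def by auto
  have E: "emeasure (lebesgue_n n) (l1_ball n (\<lambda>_. 0) 1 \<inter> l1_ball n d r) =
     (\<integral>\<^sup>+ x. (\<integral>\<^sup>+ y. indicator (l1_ball n (\<lambda>_. 0) 1 \<inter> l1_ball n d r) (x(k := y)) \<partial>lborel) \<partial>(Pi\<^sub>M I (\<lambda>_. lborel)))"
    for d
  proof -
    have S: "l1_ball n (\<lambda>_. 0) 1 \<inter> l1_ball n d r \<in> sets (lebesgue_n n)"
      using l1_ball_sets by blast
    have "emeasure (lebesgue_n n) (l1_ball n (\<lambda>_. 0) 1 \<inter> l1_ball n d r)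
       = integral\<^sup>N (lebesgue_n n) (indicator (l1_ball n (\<lambda>_. 0) 1 \<inter> l1_ball n d r))"
      using S by simp
    also have "\<dots> = (\<integral>\<^sup>+ x. (\<integral>\<^sup>+ y. indicator (l1_ball n (\<lambda>_. 0) 1 \<inter> l1_ball n d r) (x(k := y)) \<partial>lborel) \<partial>(Pi\<^sub>M I (\<lambda>_. lborel)))"
      unfolding lebesgue_n_def ins
      by (rule product_nn_integral_insert[OF fin]) (use S in \<open>simp add: lebesgue_n_def flip: ins\<close>)
    finally show ?thesis .
  qed
  show ?thesis
    unfolding E
  proof (rule nn_integral_mono)
    fix x :: "nat \<Rightarrow> real" assume "x \<in> space (Pi\<^sub>M I (\<lambda>_. lborel))"
    then have x: "x \<in> PiE ({1..n}-{k}) (\<lambda>_. UNIV)" by (simp add: space_PiM I_def)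
    define A where "A = 1 - (\<Sum>i\<in>{1..n}-{k}. \<bar>x i - 0\<bar>)"
    define B where "B = r - (\<Sum>i\<in>{1..n}-{k}. \<bar>x i - c i\<bar>)"
    have B': "r - (\<Sum>i\<in>{1..n}-{k}. \<bar>x i - (c(k:=0)) i\<bar>) = B"
      unfolding B_def by (intro arg_cong[where f="\<lambda>s. r - s"] sum.cong) auto
    have eq1: "(\<lambda>y. indicator (l1_ball n (\<lambda>_. 0) 1 \<inter> l1_ball n c r) (x(k := y)))
        = indicator {y::real. \<bar>y\<bar> \<le> A \<and> \<bar>y - c k\<bar> \<le> B}"
      using slice[OF k x, of _ "\<lambda>_. 0" 1] slice[OF k x, of _ c r]
      by (auto simp: A_def B_def indicator_def fun_eq_iff)
    have eq2: "(\<lambda>y. indicator (l1_ball n (\<lambda>_. 0) 1 \<inter> l1_ball n (c(k:=0)) r) (x(k := y)))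
        = indicator {y::real. \<bar>y\<bar> \<le> A \<and> \<bar>y\<bar> \<le> B}"
      using slice[OF k x, of _ "\<lambda>_. 0" 1] slice[OF k x, of _ "c(k:=0)" r] B'
      by (auto simp: A_def indicator_def fun_eq_iff)
    have m1: "{y::real. \<bar>y\<bar> \<le> A \<and> \<bar>y - c k\<bar> \<le> B} \<in> sets lborel" by measurable
    have m2: "{y::real. \<bar>y\<bar> \<le> A \<and> \<bar>y\<bar> \<le> B} \<in> sets lborel" by measurable
    show "(\<integral>\<^sup>+ y. indicator (l1_ball n (\<lambda>_. 0) 1 \<inter> l1_ball n c r) (x(k := y)) \<partial>lborel)
        \<le> (\<integral>\<^sup>+ y. indicator (l1_ball n (\<lambda>_. 0) 1 \<inter> l1_ball n (c(k:=0)) r) (x(k := y)) \<partial>lborel)"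
      unfolding eq1 eq2 using m1 m2 interval_meas by simp
  qed
qed

end
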